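(* Under the hypotheses and notation of the context (including $\beta=4\eta(E)/t$ and the assumption $\sum_{e\in E:\,i\in\rho(e)}\eta(e)\le\beta$ for every $i$ with $|W_i|>1$), for every edge $f=f_{ij}\in F$ let $\psi(f)=\omega(i,j)/w(\sigma(i,j))$ and $\phi(f)=\max(\psi(f),\mathrm{st}_T(f))$. Then for every $i$ with $|W_i|>1$, \[ \sum_{f\in F:\ i\in\rho(f)}\phi(f)\le2\beta. \]
   Context: Weighted edges $w[u,v]$ ($u\ne v$, $w>0$) on a vertex set $V$; $w(e)$ is the weight of $e$; $T$ is a spanning tree on $V$ with positive weights; $t>1$ is an integer. Resistance of an edge is $1/w$, of a path the sum over its edges; for $e=w[u,v]$, $T(e)$ is the path in $T$ from $u$ to $v$, $\mathrm{st}_T(e)=w\cdot\mathrm{res}(T(e))$, $\eta(e)=\max(\mathrm{st}_T(e),1)$, $\eta(E)=\sum_{e\in E}\eta(e)$. A $(T,E)$-decomposition: sets $W_1,\dots,W_h$ covering $V$, each inducing a subtree of $T$ (possibly a single vertex), pairwise intersecting in at most one vertex, with $\rho$ assigning to each edge $(u,v)\in E$ either $\{i\}$ with $u,v\in W_i$ or $\{i,j\}$ ($i\ne j$) with one endpoint in $W_i$ and the other in $W_j$. For $i\ne j$, $\sigma(i,j)$ is the edge $e\in E$ with $\rho(e)=\{i,j\}$ maximizing $w(e)/\eta(e)$ (ties broken by a fixed order), undefined if none exists. $F$ is the set of edges $f_{ij}$, one for each unordered pair $\{i,j\}$ ($i\ne j$) with $\sigma(i,j)$ defined, where $f_{ij}$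 has the endpoints of $\sigma(i,j)$ and weight $\omega(i,j)=\sum_{e\in E:\rho(e)=\{i,j\}}w(e)$; $\rho(f_{ij})=\{i,j\}$. *)

theory Defs
  imports Complex_Main
begin

definition is_simple_tpath :: "'v set set \<Rightarrow> 'v \<Rightarrow> 'v \<Rightarrow> 'v list \<Rightarrow> bool" where
  "is_simple_tpath T u v xs \<longleftrightarrow> xs \<noteq> [] \<and> hd xs = u \<and> last xs = v \<and> distinct xs \<and>
     (\<forall>k. Suc k < length xs \<longrightarrow> {xs ! k, xs ! Suc k} \<in> T)"

definition spanning_tree :: "'v set \<Rightarrow> 'v set set \<Rightarrow> ('v set \<Rightarrow> real) \<Rightarrow> bool" where
  "spanning_tree V T tw \<longleftrightarrow>
     T \<subseteq> {{a, b} | a b. a \<in> V \<and> b \<in> V \<and> a \<noteq> b} \<and>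
     (\<forall>e\<in>T. tw e > 0) \<and>
     (\<forall>u\<in>V. \<forall>v\<in>V. \<exists>!xs. is_simple_tpath T u v xs)"

definition tree_path :: "'v set set \<Rightarrow> 'v \<Rightarrow> 'v \<Rightarrow> 'v list" where
  "tree_path T u v = (THE xs. is_simple_tpath T u v xs)"

definition path_res :: "('v set \<Rightarrow> real) \<Rightarrow> 'v list \<Rightarrow> real" where
  "path_res tw xs = (\<Sum>k<length xs - 1. 1 / tw {xs ! k, xs ! Suc k})"

definition stretch :: "'v set set \<Rightarrow> ('v set \<Rightarrow> real) \<Rightarrow> 'v \<Rightarrow> 'v \<Rightarrow> real \<Rightarrow> real" where
  "stretch T tw u v c = c * path_res tw (tree_path T u v)"

text \<open>Edges are elements of an abstract type 'e (so parallel edges are allowed),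
with endpoints ends e = (u,v) and weight w e.\<close>
definition eta :: "'v set set \<Rightarrow> ('v set \<Rightarrow> real) \<Rightarrow> ('e \<Rightarrow> 'v \<times> 'v) \<Rightarrow> ('e \<Rightarrow> real) \<Rightarrow> 'e \<Rightarrow> real" where
  "eta T tw ends w e = max (stretch T tw (fst (ends e)) (snd (ends e)) (w e)) 1"

definition TE_decomposition ::
  "'v set \<Rightarrow> 'v set set \<Rightarrow> 'e set \<Rightarrow> ('e \<Rightarrow> 'v \<times> 'v) \<Rightarrow> nat \<Rightarrow> (nat \<Rightarrow> 'v set) \<Rightarrow> ('e \<Rightarrow> nat set) \<Rightarrow> bool" where
  "TE_decomposition V T E ends h W \<rho> \<longleftrightarrow>
     (\<Union>i\<in>{1..h}. W i) = V \<and>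
     (\<forall>i\<in>{1..h}. W i \<noteq> {} \<and> W i \<subseteq> V \<and>
        (\<forall>u\<in>W i. \<forall>v\<in>W i. set (tree_path T u v) \<subseteq> W i)) \<and>
     (\<forall>i\<in>{1..h}. \<forall>j\<in>{1..h}. i \<noteq> j \<longrightarrow> card (W i \<inter> W j) \<le> 1) \<and>
     (\<forall>e\<in>E. (\<exists>i\<in>{1..h}. \<rho> e = {i} \<and> fst (ends e) \<in> W i \<and> snd (ends e) \<in> W i) \<or>
             (\<exists>i\<in>{1..h}. \<exists>j\<in>{1..h}. i \<noteq> j \<and> \<rho> e = {i, j} \<and>
                 fst (ends e) \<in> W i \<and> snd (ends e) \<in> W j))"

text \<open>Index pairs {i,j} (i \<noteq> j) for which sigma(i,j), hence f_ij, is defined.\<close>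
definition F_pairs :: "'e set \<Rightarrow> ('e \<Rightarrow> nat set) \<Rightarrow> nat set set" where
  "F_pairs E \<rho> = {p. \<exists>i j. i \<noteq> j \<and> p = {i, j} \<and> (\<exists>e\<in>E. \<rho> e = p)}"

definition omega :: "'e set \<Rightarrow> ('e \<Rightarrow> real) \<Rightarrow> ('e \<Rightarrow> nat set) \<Rightarrow> nat set \<Rightarrow> real" where
  "omega E w \<rho> p = (\<Sum>e\<in>{e\<in>E. \<rho> e = p}. w e)"

end

theory Submission
  imports Defs
begin

lemma pair_bound:
  fixes S :: "'e set" and w eta :: "'e \<Rightarrow> real" and s :: 'e and r :: real
  assumes fin: "finite S" and sS: "s \<in> S"
    and wpos: "\<forall>e\<in>S. w e > 0" and eta1: "\<forall>e. eta e \<ge> 1"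
    and etast: "eta s \<ge> w s * r"
    and mx: "\<forall>e\<in>S. w e / eta e \<le> w s / eta s"
  shows "max ((\<Sum>e\<in>S. w e) / w s) ((\<Sum>e\<in>S. w e) * r) \<le> (\<Sum>e\<in>S. eta e)"
proof -
  define a where "a = w s / eta s"
  have ws: "w s > 0" using wpos sS by auto
  have es: "eta s \<ge> 1" using eta1 by auto
  have apos: "a > 0" unfolding a_def using ws es by auto
  have le: "w e \<le> a * eta e" if "e \<in> S" for e
  proof -
    have "eta e > 0" using eta1[rule_format, of e] by linarith
    moreover have "w e / eta e \<le> a" using mx that unfolding a_def by auto
    ultimately show ?thesis by (simp add: divide_le_eq mult.commute)
  qed
  define Om where "Om = (\<Sum>e\<in>S. w e)"
  define Se where "Se = (\<Sum>e\<in>S. eta e)"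
  have Sen: "Se \<ge> 0" unfolding Se_def using eta1 by (meson order_trans sum_nonneg zero_le_one)
  have Omn: "Om \<ge> 0" unfolding Om_def using wpos by (simp add: less_imp_le sum_nonneg)
  have "Om \<le> (\<Sum>e\<in>S. a * eta e)" unfolding Om_def by (rule sum_mono) (use le in auto)
  also have "\<dots> = a * Se" unfolding Se_def by (simp add: sum_distrib_left)
  finally have Oma: "Om \<le> a * Se" .
  have q: "Om / w s * eta s \<le> Se"
  proof -
    have "Om / w s * eta s = Om / a" unfolding a_def using ws es by (simp add: field_simps)
    also have "\<dots> \<le> Se" using Oma apos by (simp add: divide_le_eq mult.commute)
    finally show ?thesis .
  qed
  have q0: "Om / w s \<ge> 0" using Omn ws by simp
  have b1: "Om / w s \<le> Se"
  proof -
    have "Om / w s * 1 \<le> Om / w s * eta s" using q0 es by (intro mult_left_mono) auto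
    then show ?thesis using q by simp
  qed
  have b2: "Om * r \<le> Se"
  proof -
    have e: "Om * r = Om / w s * (w s * r)" using ws by (simp add: field_simps)
    show ?thesis
    proof (cases "w s * r \<le> 0")
      case True
      then have "Om / w s * (w s * r) \<le> 0" using q0 True by (metis mult_nonneg_nonpos)
      then show ?thesis using e Sen by linarith
    next
      case False
      have "Om / w s * (w s * r) \<le> Om / w s * eta s" using q0 etast by (intro mult_left_mono) auto
      then show ?thesis using e q by linarith
    qed
  qed
  show ?thesis using b1 b2 unfolding Om_def Se_def by simp
qed

theorem lemma10p3:
  fixes V :: "'v set" and T :: "'v set set" and tw :: "'v set \<Rightarrow> real"
    and E :: "'e set" and ends :: "'e \<Rightarrow> 'v \<times> 'v" and w :: "'e \<Rightarrow> real"
    and t :: nat and h :: nat and W :: "nat \<Rightarrow> 'v set" and \<rho> :: "'e \<Rightarrow> nat set"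
    and \<sigma> :: "nat set \<Rightarrow> 'e" and \<beta> :: real
  assumes finV: "finite V" and finE: "finite E"
    and edges: "\<forall>e\<in>E. fst (ends e) \<in> V \<and> snd (ends e) \<in> V \<and> fst (ends e) \<noteq> snd (ends e) \<and> w e > 0"
    and tree: "spanning_tree V T tw"
    and t_gt: "t > 1"
    and dec: "TE_decomposition V T E ends h W \<rho>"
    and sigma: "\<forall>p\<in>F_pairs E \<rho>. \<sigma> p \<in> E \<and> \<rho> (\<sigma> p) = p \<and>
        (\<forall>e\<in>E. \<rho> e = p \<longrightarrow> w e / eta T tw ends w e \<le> w (\<sigma> p) / eta T tw ends w (\<sigma> p))"
    and beta: "\<beta> = 4 * (\<Sum>e\<in>E. eta T tw ends w e) / real t"
    and load: "\<forall>i\<in>{1..h}. card (W i) > 1 \<longrightarrow> (\<Sum>e\<in>{e\<in>E. i \<in> \<rho> e}. eta T tw ends w e) \<le> \<beta>"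
  shows "\<forall>i\<in>{1..h}. card (W i) > 1 \<longrightarrow>
     (\<Sum>p\<in>{p\<in>F_pairs E \<rho>. i \<in> p}.
        max (omega E w \<rho> p / w (\<sigma> p))
            (stretch T tw (fst (ends (\<sigma> p))) (snd (ends (\<sigma> p))) (omega E w \<rho> p)))
     \<le> 2 * \<beta>"
proof (intro ballI impI)
  fix i assume iI: "i \<in> {1..h}" and ci: "card (W i) > 1"
  define et where "et = eta T tw ends w"
  have et1: "\<forall>e. et e \<ge> 1" unfolding et_def eta_def by simp
  define P where "P = {p\<in>F_pairs E \<rho>. i \<in> p}"
  have finF: "finite (F_pairs E \<rho>)"
  proof -
    have "F_pairs E \<rho> \<subseteq> \<rho> ` E" unfolding F_pairs_def by auto
    then show ?thesis using finE finite_subset by blast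
  qed
  have finP: "finite P" unfolding P_def using finF by simp
  have each: "max (omega E w \<rho> p / w (\<sigma> p))
            (stretch T tw (fst (ends (\<sigma> p))) (snd (ends (\<sigma> p))) (omega E w \<rho> p))
        \<le> (\<Sum>e\<in>{e\<in>E. \<rho> e = p}. et e)" if pP: "p \<in> P" for p
  proof -
    have pF: "p \<in> F_pairs E \<rho>" using pP unfolding P_def by auto
    let ?r = "path_res tw (tree_path T (fst (ends (\<sigma> p))) (snd (ends (\<sigma> p))))"
    have "max ((\<Sum>e\<in>{e\<in>E. \<rho> e = p}. w e) / w (\<sigma> p)) ((\<Sum>e\<in>{e\<in>E. \<rho> e = p}. w e) * ?r)
          \<le> (\<Sum>e\<in>{e\<in>E. \<rho> e = p}. et e)"
    proof (rule pair_bound)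
      show "finite {e\<in>E. \<rho> e = p}" using finE by simp
      show "\<sigma> p \<in> {e\<in>E. \<rho> e = p}" using sigma pF by auto
      show "\<forall>e\<in>{e\<in>E. \<rho> e = p}. w e > 0" using edges by auto
      show "\<forall>e. et e \<ge> 1" by (rule et1)
      show "et (\<sigma> p) \<ge> w (\<sigma> p) * ?r" unfolding et_def eta_def stretch_def by simp
      show "\<forall>e\<in>{e\<in>E. \<rho> e = p}. w e / et e \<le> w (\<sigma> p) / et (\<sigma> p)"
        using sigma pF unfolding et_def by auto
    qed
    then show ?thesis unfolding omega_def stretch_def by simp
  qed
  have "(\<Sum>p\<in>P. max (omega E w \<rho> p / w (\<sigma> p))
            (stretch T tw (fst (ends (\<sigma> p))) (snd (ends (\<sigma> p))) (omega E w \<rho> p)))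
        \<le> (\<Sum>p\<in>P. \<Sum>e\<in>{e\<in>E. \<rho> e = p}. et e)"
    by (rule sum_mono) (rule each)
  also have "\<dots> = (\<Sum>p\<in>P. \<Sum>e\<in>{e\<in>{e\<in>E. \<rho> e \<in> P}. \<rho> e = p}. et e)"
    by (rule sum.cong) (auto intro!: sum.cong)
  also have "\<dots> = (\<Sum>e\<in>{e\<in>E. \<rho> e \<in> P}. et e)"
    using sum.group[of "{e\<in>E. \<rho> e \<in> P}" P \<rho> et] finE finP by auto
  also have "\<dots> \<le> (\<Sum>e\<in>{e\<in>E. i \<in> \<rho> e}. et e)"
  proof (rule sum_mono2)
    show "finite {e\<in>E. i \<in> \<rho> e}" using finE by simp
    show "{e\<in>E. \<rho> e \<in> P} \<subseteq> {e\<in>E. i \<in> \<rho> e}" unfolding P_def by auto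
    show "0 \<le> et b" for b
      using et1 by (meson order_trans zero_le_one)
  qed
  also have "\<dots> \<le> \<beta>" using load iI ci unfolding et_def by auto
  finally have main: "(\<Sum>p\<in>P. max (omega E w \<rho> p / w (\<sigma> p))
            (stretch T tw (fst (ends (\<sigma> p))) (snd (ends (\<sigma> p))) (omega E w \<rho> p))) \<le> \<beta>" .
  have "(\<Sum>e\<in>{e\<in>E. i \<in> \<rho> e}. et e) \<ge> 0"
    using et1 by (meson order_trans zero_le_one sum_nonneg)
  then have "\<beta> \<ge> 0" using load iI ci unfolding et_def by force
  then show "(\<Sum>p\<in>{p\<in>F_pairs E \<rho>. i \<in> p}.
        max (omega E w \<rho> p / w (\<sigma> p))
            (stretch T tw (fst (ends (\<sigma> p))) (snd (ends (\<sigma> p))) (omega E w \<rho> p)))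
     \<le> 2 * \<beta>" using main unfolding P_def by linarith
qed

end
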